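(* Let $\beta\in(1,2)$ and let $A(\beta)\subset\mathbb{R}^2$ be a planar convex body which has a centre of symmetry, is symmetric with respect to the $y$-axis, and whose boundary within $[-1,1]^2$ coincides with the graph of $y=|x|^\beta$. Then there exists a small positive constant $c$, independent of $\beta$, such that $$|K_{A(\beta)}(\theta+\pi/2,\lambda)|\approx_\beta\begin{cases}\lambda^{1/\beta} & \text{if } 0\leq|\theta|<\lambda^{\frac{\beta-1}{\beta}}<c,\\ \lambda^{1/2}|\theta|^{\frac{2-\beta}{2(\beta-1)}} & \text{if } \lambda^{\frac{\beta-1}{\beta}}\leq|\theta|<c.\end{cases}$$
   Context: For a planar convex body $C$ (compact convex set with nonempty interior), an angle $\theta$ and $\lambda>0$, with $\mathbf{u}(\theta)=(\cos\theta,\sin\theta)$, the chord is $K_C(\theta,\lambda)=\{\mathbf{x}\in C:\mathbf{x}\cdot\mathbf{u}(\theta)=\inf_{\mathbf{y}\in C}\mathbf{y}\cdot\mathbf{u}(\theta)+\lambda\}$, and $|K_C(\theta,\lambda)|$ denotes its length. The notation $f\approx_\beta g$ means there exist positive constants $c_1,c_2$ depending only on $\beta$ with $c_1 g\leq f\leq c_2 g$ on the stated range. *)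

theory Defs
  imports "HOL-Analysis.Analysis"
begin

definition convex_body :: "(real \<times> real) set \<Rightarrow> bool" where
  "convex_body C \<longleftrightarrow> compact C \<and> convex C \<and> interior C \<noteq> {}"

definition udir :: "real \<Rightarrow> real \<times> real" where
  "udir \<theta> = (cos \<theta>, sin \<theta>)"

definition chord :: "(real \<times> real) set \<Rightarrow> real \<Rightarrow> real \<Rightarrow> (real \<times> real) set" where
  "chord C \<theta> l = {x \<in> C. x \<bullet> udir \<theta> = (INF y\<in>C. y \<bullet> udir \<theta>) + l}"

text \<open>Length of the chord (a segment) = its diameter.\<close>
definition chord_len :: "(real \<times> real) set \<Rightarrow> real \<Rightarrow> real \<Rightarrow> real" where
  "chord_len C \<theta> l = diameter (chord C \<theta> l)"

definition has_centre_of_symmetry :: "(real \<times> real) set \<Rightarrow> bool" where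
  "has_centre_of_symmetry C \<longleftrightarrow> (\<exists>p. \<forall>x. x \<in> C \<longleftrightarrow> (2::real) *\<^sub>R p - x \<in> C)"

definition y_axis_symmetric :: "(real \<times> real) set \<Rightarrow> bool" where
  "y_axis_symmetric C \<longleftrightarrow> (\<forall>x y. (x, y) \<in> C \<longleftrightarrow> (-x, y) \<in> C)"

definition boundary_graph :: "real \<Rightarrow> (real \<times> real) set \<Rightarrow> bool" where
  "boundary_graph \<beta> C \<longleftrightarrow>
     frontier C \<inter> ({-1..1} \<times> {-1..1}) = {(x, \<bar>x\<bar> powr \<beta>) | x. -1 \<le> x \<and> x \<le> 1}"

end

theory Submission
  imports Defs
begin

lemma taylor2_powr:
  fixes b a x :: real
  assumes a: "0 < a" and x: "0 < x"
  shows "\<exists>t. min a x \<le> t \<and> t \<le> max a x \<and> 0 < t \<and>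
     x powr b = a powr b + b * a powr (b - 1) * (x - a) + b * (b - 1) / 2 * t powr (b - 2) * (x - a)^2"
proof (cases "x = a")
  case True then show ?thesis using a by (intro exI[of _ a]) auto
next
  case False
  define d :: "nat \<Rightarrow> real \<Rightarrow> real" where
    "d m t = (if m = 0 then t powr b else if m = 1 then b * t powr (b - 1) else b * (b - 1) * t powr (b - 2))" for m t
  have D: "\<forall>m t. m < 2 \<and> min a x \<le> t \<and> t \<le> max a x \<longrightarrow> DERIV (d m) t :> d (Suc m) t"
  proof (intro allI impI)
    fix m :: nat and t :: real assume h: "m < 2 \<and> min a x \<le> t \<and> t \<le> max a x"
    then have t: "t > 0" using a x by (auto simp: min_def split: if_splits)
    show "DERIV (d m) t :> d (Suc m) t"
    proof (cases "m = 0")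
      case True
      then show ?thesis unfolding d_def using has_real_derivative_powr[OF t, of b] by simp
    next
      case False
      then have "m = 1" using h by auto
      moreover have "DERIV (\<lambda>t. b * t powr (b - 1)) t :> b * ((b - 1) * t powr (b - 1 - 1))"
        by (intro DERIV_cmult has_real_derivative_powr t)
      ultimately show ?thesis unfolding d_def by (simp add: algebra_simps)
    qed
  qed
  have "\<exists>t. (if x < a then x < t \<and> t < a else a < t \<and> t < x) \<and>
    (\<lambda>t. t powr b) x = (\<Sum>m<2. (d m a / fact m) * (x - a)^m) + (d 2 t / fact 2) * (x - a)^2"
    by (rule Taylor[of 2 d "\<lambda>t. t powr b" "min a x" "max a x" a x]) (use D False in \<open>auto simp: d_def\<close>)
  then obtain t where t: "(if x < a then x < t \<and> t < a else a < t \<and> t < x)"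
    and e: "x powr b = (\<Sum>m<2. (d m a / fact m) * (x - a)^m) + (d 2 t / fact 2) * (x - a)^2" by auto
  have e2: "x powr b = a powr b + b * a powr (b - 1) * (x - a) + b * (b - 1) / 2 * t powr (b - 2) * (x - a)^2"
    using e by (simp add: d_def numeral_2_eq_2 lessThan_Suc)
  show ?thesis
    by (intro exI[of _ t]) (use t e2 a x in \<open>auto simp: min_def max_def split: if_splits\<close>)
qed

definition aa :: "real \<Rightarrow> real \<Rightarrow> real" where
  "aa b s = (s / b) powr (1 / (b - 1))"
definition GG :: "real \<Rightarrow> real \<Rightarrow> real \<Rightarrow> real" where
  "GG b s x = \<bar>x\<bar> powr b - s * x + (b - 1) * aa b s powr b"
definition QQ :: "real \<Rightarrow> real \<Rightarrow> real \<Rightarrow> real" where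
  "QQ b a v = (a + v) powr (b - 2) * v^2"

lemma aa_nonneg: "0 \<le> aa b s" by (simp add: aa_def)

lemma aa_pow:
  assumes "1 < b" "0 \<le> s" shows "aa b s powr (b - 1) = s / b"
proof (cases "s = 0")
  case True then show ?thesis by (simp add: aa_def)
next
  case False
  have "aa b s powr (b - 1) = (s/b) powr (1 / (b - 1) * (b - 1))" by (simp add: aa_def powr_powr)
  also have "\<dots> = s / b" using assms by simp
  finally show ?thesis .
qed

lemma aa_pos: assumes "1 < b" "0 < s" shows "0 < aa b s"
  using assms by (simp add: aa_def)

lemma aa_zero_iff: assumes "1 < b" "0 \<le> s" shows "aa b s = 0 \<longleftrightarrow> s = 0"
  using assms by (auto simp: aa_def)

lemma powr_times_self: "0 \<le> (a::real) \<Longrightarrow> a * a powr (b - 1) = a powr b"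
  by (simp add: powr_mult_base)

lemma sq_powr: fixes v b :: real assumes "0 < v" shows "v powr (b - 2) * v^2 = v powr b"
proof -
  have "v^2 = v powr 2" using assms powr_realpow[of v 2] by simp
  then show ?thesis by (simp add: powr_add[symmetric])
qed

lemma G_taylor:
  assumes b: "1 < b" and s: "0 \<le> s" and a: "a = aa b s" "0 < a" and x: "0 < x"
  shows "\<exists>t. min a x \<le> t \<and> t \<le> max a x \<and> 0 < t \<and> GG b s x = b * (b - 1) / 2 * t powr (b - 2) * (x - a)^2"
proof -
  obtain t where t: "min a x \<le> t" "t \<le> max a x" "0 < t"
    and e: "x powr b = a powr b + b * a powr (b - 1) * (x - a) + b * (b - 1) / 2 * t powr (b - 2) * (x - a)^2"
    using taylor2_powr[OF a(2) x, of b] by blast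
  have sb: "s = b * a powr (b - 1)" using aa_pow[OF b s] a b by simp
  have aa: "a * a powr (b - 1) = a powr b" using a by (simp add: powr_times_self)
  have "GG b s x = x powr b - b * a powr (b - 1) * x + (b - 1) * a powr b"
    using x a sb by (simp add: GG_def)
  also have "\<dots> = b * (b - 1) / 2 * t powr (b - 2) * (x - a)^2"
    unfolding e using aa by (simp add: algebra_simps)
  finally show ?thesis using t by blast
qed

lemma QQ_le_pow: fixes a v b :: real assumes "0 \<le> a" "0 \<le> v" "b \<le> 2"
  shows "QQ b a v \<le> v powr b"
proof (cases "v = 0")
  case True then show ?thesis by (simp add: QQ_def)
next
  case False
  then have v: "0 < v" using assms by auto
  have "(a + v) powr (b - 2) \<le> v powr (b - 2)" using assms v by (intro powr_mono2') auto
  then have "QQ b a v \<le> v powr (b - 2) * v^2" unfolding QQ_def by (intro mult_right_mono) auto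
  then show ?thesis using sq_powr[OF v] by simp
qed

lemma QQ_le_quad: fixes a v b :: real assumes "0 < a" "0 \<le> v" "b \<le> 2"
  shows "QQ b a v \<le> a powr (b - 2) * v^2"
proof -
  have "(a + v) powr (b - 2) \<le> a powr (b - 2)" using assms by (intro powr_mono2') auto
  then show ?thesis unfolding QQ_def by (intro mult_right_mono) auto
qed

lemma QQ_nonneg: "0 \<le> QQ b a v" by (simp add: QQ_def)

lemma G_lower:
  assumes b: "1 < b" "b < 2" and s: "0 \<le> s" and a: "a = aa b s"
  shows "(b - 1) / 4 * QQ b a \<bar>x - a\<bar> \<le> GG b s x"
proof -
  have a0: "0 \<le> a" using a aa_nonneg by simp
  have apb: "a powr (b - 1) = s / b" using aa_pow[OF b(1) s] a by simp
  show ?thesis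
  proof (cases "x \<le> 0")
    case True
    have G: "GG b s x = \<bar>x\<bar> powr b + s * \<bar>x\<bar> + (b - 1) * a powr b"
      using True a by (simp add: GG_def)
    have d: "\<bar>x - a\<bar> = a + \<bar>x\<bar>" using True a0 by auto
    have q1: "QQ b a \<bar>x - a\<bar> \<le> (a + \<bar>x\<bar>) powr b" using QQ_le_pow[OF a0, of "\<bar>x - a\<bar>" b] b d by simp
    have "(a + \<bar>x\<bar>) powr b \<le> (2 * max a \<bar>x\<bar>) powr b" using a0 b by (intro powr_mono2) auto
    also have "\<dots> = 2 powr b * max a \<bar>x\<bar> powr b" using a0 by (simp add: powr_mult)
    also have "\<dots> \<le> 4 * (a powr b + \<bar>x\<bar> powr b)"
    proof (rule mult_mono)
      show "2 powr b \<le> 4" using powr_mono[of b 2 2] b by simp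
      show "max a \<bar>x\<bar> powr b \<le> a powr b + \<bar>x\<bar> powr b" by (simp add: max_def)
    qed auto
    finally have "QQ b a \<bar>x - a\<bar> \<le> 4 * (a powr b + \<bar>x\<bar> powr b)" using q1 by linarith
    then have "(b - 1) / 4 * QQ b a \<bar>x - a\<bar> \<le> (b - 1) * (a powr b + \<bar>x\<bar> powr b)"
      using b by (simp add: mult_left_mono)
    also have "\<dots> \<le> GG b s x"
    proof -
      have "(b - 1) * \<bar>x\<bar> powr b \<le> \<bar>x\<bar> powr b" using b by (intro mult_left_le_one_le) auto
      moreover have "0 \<le> s * \<bar>x\<bar>" using s by simp
      ultimately show ?thesis unfolding G by (simp add: distrib_left)
    qed
    finally show ?thesis .
  next
    case False
    then have x: "0 < x" by simp
    show ?thesis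
    proof (cases "a = 0")
      case True
      then have "s = 0" using apb b by simp
      then have G: "GG b s x = x powr b" using x True a by (simp add: GG_def)
      have "QQ b a \<bar>x - a\<bar> \<le> x powr b" using QQ_le_pow[of a x b] True x b by simp
      moreover have "0 \<le> QQ b a \<bar>x - a\<bar>" by (rule QQ_nonneg)
      moreover have "(b - 1) / 4 * QQ b a \<bar>x - a\<bar> \<le> QQ b a \<bar>x - a\<bar>"
        using b by (intro mult_left_le_one_le) (auto simp: QQ_nonneg)
      ultimately show ?thesis using G by linarith
    next
      case False
      then have ap: "0 < a" using a0 by simp
      obtain t where t: "min a x \<le> t" "t \<le> max a x" "0 < t"
        and G: "GG b s x = b * (b - 1) / 2 * t powr (b - 2) * (x - a)^2"
        using G_taylor[OF b(1) s a ap x] by blast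
      have "(a + \<bar>x - a\<bar>) powr (b - 2) \<le> t powr (b - 2)"
        using t b by (intro powr_mono2') (auto simp: max_def split: if_splits)
      then have "QQ b a \<bar>x - a\<bar> \<le> t powr (b - 2) * (x - a)^2" unfolding QQ_def power2_abs
        by (intro mult_right_mono) auto
      then have "(b - 1) / 4 * QQ b a \<bar>x - a\<bar> \<le> (b - 1) / 4 * (t powr (b - 2) * (x - a)^2)"
        using b by (intro mult_left_mono) auto
      also have "\<dots> \<le> b * (b - 1) / 2 * (t powr (b - 2) * (x - a)^2)"
      proof (rule mult_right_mono)
        have "1 * (b - 1) \<le> b * (b - 1)" using b by (intro mult_right_mono) auto
        then have "(b - 1) / 2 \<le> b * (b - 1) / 2" by (intro divide_right_mono) auto
        moreover have "(b - 1) / 4 \<le> (b - 1) / 2" using b by simp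
        ultimately show "(b - 1) / 4 \<le> b * (b - 1) / 2" by (rule order_trans[rotated])
      qed auto
      finally show ?thesis using G by (simp add: mult.assoc)
    qed
  qed
qed

lemma G_upper:
  assumes b: "1 < b" "b < 2" and s: "0 \<le> s" and a: "a = aa b s" and v: "0 \<le> v"
  shows "GG b s (a + v) \<le> 4 * QQ b a v"
proof -
  have a0: "0 \<le> a" using a aa_nonneg by simp
  have apb: "a powr (b - 1) = s / b" using aa_pow[OF b(1) s] a by simp
  show ?thesis
  proof (cases "a = 0")
    case True
    then have "s = 0" using apb b by simp
    then have G: "GG b s (a + v) = v powr b" unfolding GG_def a[symmetric] using v True by simp
    show ?thesis
    proof (cases "v = 0")
      case True then show ?thesis using G by (simp add: QQ_def)
    next
      case False
      then have "QQ b a v = v powr b" using sq_powr[of v b] v \<open>a = 0\<close> by (simp add: QQ_def)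
      then show ?thesis using G by simp
    qed
  next
    case False
    then have ap: "0 < a" using a0 by simp
    have sb: "s = b * a powr (b - 1)" using apb b by simp
    have aa: "a * a powr (b - 1) = a powr b" using a0 by (simp add: powr_times_self)
    have G: "GG b s (a + v) = (a + v) powr b - a powr b - b * a powr (b - 1) * v"
      unfolding GG_def a[symmetric] using a0 v by (subst sb) (simp add: algebra_simps aa)
    show ?thesis
    proof (cases "v \<le> a")
      case True
      show ?thesis
      proof (cases "v = 0")
        case True then show ?thesis using G by (simp add: QQ_def)
      next
        case False
        then have vp: "0 < v" using v by simp
        obtain t where t: "min a (a + v) \<le> t" "t \<le> max a (a + v)" "0 < t"
          and G2: "GG b s (a + v) = b * (b - 1) / 2 * t powr (b - 2) * (a + v - a)^2"
          using G_taylor[OF b(1) s a ap, of "a + v"] ap v by auto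
        have "t powr (b - 2) \<le> a powr (b - 2)" using t ap v b by (intro powr_mono2') (auto simp: min_def)
        then have "t powr (b - 2) * v^2 \<le> a powr (b - 2) * v^2" by (intro mult_right_mono) auto
        then have "b * (b - 1) / 2 * (t powr (b - 2) * v^2) \<le> b * (b - 1) / 2 * (a powr (b - 2) * v^2)"
          using b by (intro mult_left_mono) auto
        then have "GG b s (a + v) \<le> b * (b - 1) / 2 * (a powr (b - 2) * v^2)" unfolding G2
          by (simp add: mult.assoc)
        also have "\<dots> \<le> 1 * (a powr (b - 2) * v^2)"
        proof (rule mult_right_mono)
          have "b * (b - 1) \<le> 2 * 1" using b by (intro mult_mono) auto
          then show "b * (b - 1) / 2 \<le> 1" by simp
        qed auto
        also have "a powr (b - 2) \<le> 2 * (a + v) powr (b - 2)"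
        proof -
          have "(2 * a) powr (b - 2) \<le> (a + v) powr (b - 2)" using True ap b v by (intro powr_mono2') auto
          moreover have "(2 * a) powr (b - 2) = 2 powr (b - 2) * a powr (b - 2)" by (simp add: powr_mult)
          moreover have "2 powr (-1) \<le> (2::real) powr (b - 2)" using b by (intro powr_mono) auto
          moreover have "(2::real) powr (-1) = 1/2" by (simp add: powr_minus)
          moreover have "1/2 * a powr (b - 2) \<le> 2 powr (b - 2) * a powr (b - 2)"
            using calculation(3,4) by (intro mult_right_mono) auto
          ultimately have "1/2 * a powr (b - 2) \<le> (a + v) powr (b - 2)"
            by linarith
          then show ?thesis by simp
        qed
        then have "1 * (a powr (b - 2) * v^2) \<le> 2 * (a + v) powr (b - 2) * v^2"
          by (simp add: mult_right_mono)
        finally have "GG b s (a + v) \<le> 2 * ((a + v) powr (b - 2) * v^2)" by (simp add: mult.assoc)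
        moreover have "0 \<le> (a + v) powr (b - 2) * v^2" by simp
        ultimately show ?thesis unfolding QQ_def by linarith
      qed
    next
      case False
      then have vp: "0 < v" "a < v" using a0 by auto
      have "0 \<le> a powr b + b * a powr (b - 1) * v" using b v by simp
      then have "GG b s (a + v) \<le> (a + v) powr b" using G by simp
      also have "\<dots> = (a + v) powr (b - 2) * (a + v)^2" using sq_powr[of "a + v" b] ap v by simp
      also have "\<dots> \<le> (a + v) powr (b - 2) * (2 * v)^2"
        using vp ap by (intro mult_left_mono power_mono) auto
      finally show ?thesis unfolding QQ_def by (simp add: power_mult_distrib)
    qed
  qed
qed

lemma QQ_repr: fixes a v b :: real assumes "0 \<le> a" "0 < v"
  shows "QQ b a v = v powr b * (v / (a + v)) powr (2 - b)"
proof -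
  have av: "0 < a + v" using assms by simp
  have "v powr b * (v / (a + v)) powr (2 - b) = v powr b * v powr (2 - b) / (a + v) powr (2 - b)"
    using assms by (simp add: powr_divide)
  also have "v powr b * v powr (2 - b) = v^2"
    using assms powr_realpow[of v 2] by (simp add: powr_add[symmetric])
  also have "1 / (a + v) powr (2 - b) = (a + v) powr (b - 2)"
    using av by (simp add: powr_minus[of _ "2 - b", simplified] divide_inverse)
  ultimately show ?thesis unfolding QQ_def
    by (metis (no_types, lifting) mult.commute times_divide_eq_right mult_1)
qed

lemma QQ_mono: fixes a v1 v2 b :: real assumes "0 \<le> a" "0 \<le> v1" "v1 \<le> v2" "b < 2" "0 \<le> b"
  shows "QQ b a v1 \<le> QQ b a v2"
proof (cases "v1 = 0")
  case True then show ?thesis by (simp add: QQ_def)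
next
  case False
  then have p: "0 < v1" "0 < v2" using assms by auto
  have r: "v1 / (a + v1) \<le> v2 / (a + v2)" using assms p by (simp add: field_simps) (simp add: mult_left_mono)
  have "v1 powr b * (v1 / (a + v1)) powr (2 - b) \<le> v2 powr b * (v2 / (a + v2)) powr (2 - b)"
    using assms p r by (intro mult_mono powr_mono2) auto
  then show ?thesis using QQ_repr[OF assms(1) p(1)] QQ_repr[OF assms(1) p(2)] by simp
qed

lemma width_upper_gen:
  assumes b: "1 < b" "b < 2" and s: "0 \<le> s" and a: "a = aa b s" and w: "0 \<le> w"
    and mu: "\<mu> < (b - 1) / 4 * QQ b a w" and G: "GG b s x \<le> \<mu>"
  shows "\<bar>x - a\<bar> < w"
proof (rule ccontr)
  assume "\<not> \<bar>x - a\<bar> < w"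
  then have "QQ b a w \<le> QQ b a \<bar>x - a\<bar>" using w b a aa_nonneg by (intro QQ_mono) auto
  then have "(b - 1) / 4 * QQ b a w \<le> (b - 1) / 4 * QQ b a \<bar>x - a\<bar>" using b by (intro mult_left_mono) auto
  then show False using G_lower[OF b s a, of x] mu G by linarith
qed

lemma case1_lower:
  assumes b: "1 < b" "b < 2" and s: "0 \<le> s" and a: "a = aa b s"
    and l: "0 < l" "l \<le> \<mu>"
  shows "GG b s (a + l powr (1/b) / 4) \<le> \<mu>"
proof -
  have "GG b s (a + l powr (1/b) / 4) \<le> 4 * QQ b a (l powr (1/b) / 4)"
    using G_upper[OF b s a] by simp
  also have "QQ b a (l powr (1/b) / 4) \<le> (l powr (1/b) / 4) powr b"
    using QQ_le_pow[of a "l powr (1/b) / 4" b] a aa_nonneg b by auto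
  also have "(l powr (1/b) / 4) powr b = l / 4 powr b"
    using l b by (simp add: powr_divide powr_powr)
  also have "4 * (l / 4 powr b) \<le> l"
  proof -
    have "4 powr 1 \<le> (4::real) powr b" using b by (intro powr_mono) auto
    then show ?thesis using l by (simp add: field_simps)
  qed
  finally show ?thesis using l by simp
qed

lemma case1_upper:
  assumes b: "1 < b" "b < 2" and s: "0 \<le> s" and a: "a = aa b s"
    and l: "0 < l" "\<mu> \<le> 2 * l" and D: "0 \<le> D" and aD: "a \<le> D * l powr (1/b)"
    and G: "GG b s x \<le> \<mu>"
  shows "\<bar>x - a\<bar> < (D + 16 / (b - 1) + 1) * l powr (1/b)"
proof -
  define C where "C = D + 16 / (b - 1) + 1"
  define T where "T = l powr (1/b)"
  define w where "w = C * T"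
  have C1: "1 \<le> C" "D \<le> C" using D b by (auto simp: C_def)
  have T: "0 < T" using l by (simp add: T_def)
  have w: "0 < w" using C1 T by (simp add: w_def)
  have a0: "0 \<le> a" using a aa_nonneg by simp
  have aw: "a \<le> w" using aD C1 T a0 by (simp add: w_def T_def[symmetric]) (metis mult_right_mono less_imp_le order_trans)
  have wb: "w powr b = C powr b * l"
    using C1 T l b by (simp add: w_def T_def powr_mult powr_powr)
  have Cb: "C \<le> C powr b" using powr_mono[of 1 b C] C1 b by simp
  have "(2 * w) powr (b - 2) \<le> (a + w) powr (b - 2)" using aw w b a0 by (intro powr_mono2') auto
  moreover have "(2 * w) powr (b - 2) = 2 powr (b - 2) * w powr (b - 2)" by (simp add: powr_mult)
  moreover have "2 powr (-1) \<le> (2::real) powr (b - 2)" using b by (intro powr_mono) auto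
  moreover have "(2::real) powr (-1) = 1/2" by (simp add: powr_minus)
  moreover have "1/2 * w powr (b - 2) \<le> 2 powr (b - 2) * w powr (b - 2)"
    using calculation(3,4) by (intro mult_right_mono) auto
  ultimately have "1/2 * w powr (b - 2) \<le> (a + w) powr (b - 2)" by linarith
  then have "1/2 * w powr (b - 2) * w^2 \<le> QQ b a w" unfolding QQ_def by (intro mult_right_mono) auto
  then have Qw: "1/2 * (C powr b * l) \<le> QQ b a w" using sq_powr[OF w, of b] wb by (simp add: mult.assoc)
  have "(b - 1) / 4 * (1/2 * (C * l)) \<le> (b - 1) / 4 * QQ b a w"
    using Qw Cb l b by (intro mult_left_mono) (auto intro: order_trans[rotated] mult_right_mono)
  moreover have "2 * l < (b - 1) / 4 * (1/2 * (C * l))"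
  proof -
    have "16 / (b - 1) < C" using D by (simp add: C_def)
    then have "16 < C * (b - 1)" using b by (simp add: field_simps)
    then have "16 * l < C * (b - 1) * l" using l by simp
    then show ?thesis by (simp add: field_simps)
  qed
  ultimately have "\<mu> < (b - 1) / 4 * QQ b a w" using l by linarith
  from width_upper_gen[OF b s a _ this G] w show ?thesis by (simp add: w_def C_def T_def)
qed

lemma sq_powr_half: fixes x c :: real assumes "0 \<le> x" shows "(x powr (c/2))^2 = x powr c"
proof (cases "x = 0")
  case True then show ?thesis by simp
next
  case False
  then have "(x powr (c/2))^2 = x powr (c/2 + c/2)" by (simp add: power2_eq_square powr_add[symmetric])
  then show ?thesis by simp
qed

lemma powr_cancel_neg: fixes a b :: real assumes "0 < a" shows "a powr (b - 2) * a powr (2 - b) = 1"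
  using assms by (simp add: powr_add[symmetric])

lemma T_sq: fixes a l b :: real assumes "0 < a" "0 < l"
  shows "(l powr (1/2) * a powr ((2 - b)/2))^2 = l * a powr (2 - b)"
  using sq_powr_half[of l 1] sq_powr_half[of a "2 - b"] assms by (simp add: power_mult_distrib)

lemma case2_lower:
  assumes b: "1 < b" "b < 2" and s: "0 \<le> s" and a: "a = aa b s" and ap: "0 < a"
    and l: "0 < l" "l \<le> \<mu>"
  shows "GG b s (a + l powr (1/2) * a powr ((2 - b)/2) / 2) \<le> \<mu>"
proof -
  define T where "T = l powr (1/2) * a powr ((2 - b)/2)"
  have T: "0 \<le> T" by (simp add: T_def)
  have "GG b s (a + T / 2) \<le> 4 * QQ b a (T / 2)" using G_upper[OF b s a] T by simp
  also have "QQ b a (T / 2) \<le> a powr (b - 2) * (T/2)^2" using QQ_le_quad[OF ap, of "T/2" b] T b by simp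
  also have "4 * (a powr (b - 2) * (T/2)^2) = a powr (b - 2) * T^2" by (simp add: power2_eq_square)
  also have "\<dots> = l" using T_sq[OF ap l(1), of b] powr_cancel_neg[OF ap, of b] unfolding T_def
    by (metis mult.assoc mult.commute mult_1)
  finally show ?thesis using l unfolding T_def by simp
qed

lemma case2_upper:
  assumes b: "1 < b" "b < 2" and s: "0 \<le> s" and a: "a = aa b s" and ap: "0 < a"
    and l: "0 < l" "\<mu> \<le> 2 * l" and E: "1 \<le> E" "l \<le> E * a powr b"
    and G: "GG b s x \<le> \<mu>"
  shows "\<bar>x - a\<bar> < (1 + 16 * sqrt E / (b - 1)) * (l powr (1/2) * a powr ((2 - b)/2))"
proof -
  define R where "R = sqrt E"
  define C where "C = 1 + 16 * R / (b - 1)"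
  define T where "T = l powr (1/2) * a powr ((2 - b)/2)"
  define w where "w = C * T"
  have R: "1 \<le> R" using E by (simp add: R_def)
  have C: "1 \<le> C" "16 * R / (b - 1) < C" using R b by (auto simp: C_def)
  have T: "0 < T" using l ap by (simp add: T_def)
  have w: "0 < w" using C T by (simp add: w_def)
  have T2: "T^2 = l * a powr (2 - b)" using T_sq[OF ap l(1)] by (simp add: T_def)
  have "T^2 \<le> E * a powr b * a powr (2 - b)" unfolding T2 using E by (intro mult_right_mono) auto
  also have "\<dots> = E * a^2" using ap by (simp add: mult.assoc powr_add[symmetric] powr_realpow[of a 2, simplified])
  finally have "T^2 \<le> (R * a)^2" using E by (simp add: R_def power_mult_distrib)
  then have TR: "T \<le> R * a" using T R ap by (simp add: power2_le_iff_abs_le abs_le_iff)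
  have aw: "a + w \<le> (1 + C * R) * a"
  proof -
    have "w \<le> C * (R * a)" using TR C by (simp add: w_def)
    then show ?thesis by (simp add: algebra_simps)
  qed
  have "((1 + C * R) * a) powr (b - 2) \<le> (a + w) powr (b - 2)" using aw ap w b by (intro powr_mono2') auto
  moreover have "((1 + C * R) * a) powr (b - 2) = (1 + C * R) powr (b - 2) * a powr (b - 2)"
    using C R ap by (simp add: powr_mult)
  moreover have "(1 + C * R) powr (-1) \<le> (1 + C * R) powr (b - 2)"
    using b C R by (intro powr_mono) auto
  moreover have "(1 + C * R) powr (-1) = 1 / (1 + C * R)" using C R by (simp add: powr_minus divide_inverse)
  moreover have "1 / (2 * C * R) \<le> 1 / (1 + C * R)"
  proof -
    have "1 \<le> C * R" using C R by (metis mult_mono' mult_1 zero_le_one)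
    then show ?thesis using C R by (intro divide_left_mono) auto
  qed
  moreover have "1 / (2 * C * R) * a powr (b - 2) \<le> (1 + C * R) powr (b - 2) * a powr (b - 2)"
    using calculation(3,4,5) by (intro mult_right_mono) auto
  ultimately have low: "1 / (2 * C * R) * a powr (b - 2) \<le> (a + w) powr (b - 2)" by linarith
  have "QQ b a w = (a + w) powr (b - 2) * (C^2 * T^2)" by (simp add: QQ_def w_def power_mult_distrib)
  also have "\<dots> \<ge> 1 / (2 * C * R) * a powr (b - 2) * (C^2 * T^2)" using low by (intro mult_right_mono) auto
  finally have "1 / (2 * C * R) * a powr (b - 2) * (C^2 * (l * a powr (2 - b))) \<le> QQ b a w" unfolding T2 .
  moreover have "1 / (2 * C * R) * a powr (b - 2) * (C^2 * (l * a powr (2 - b))) = C * l / (2 * R)"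
    using powr_cancel_neg[OF ap, of b] C R
    by (simp add: field_simps power2_eq_square)
  ultimately have Qw: "C * l / (2 * R) \<le> QQ b a w" by simp
  have "2 * l < (b - 1) / 4 * (C * l / (2 * R))"
  proof -
    have "16 * R < C * (b - 1)" using C(2) b by (simp add: field_simps)
    then have "16 * R * l < C * (b - 1) * l" using l by simp
    then show ?thesis using R b by (simp add: field_simps)
  qed
  also have "\<dots> \<le> (b - 1) / 4 * QQ b a w" using Qw b by (intro mult_left_mono) auto
  finally have "\<mu> < (b - 1) / 4 * QQ b a w" using l by linarith
  from width_upper_gen[OF b s a _ this G] w show ?thesis by (simp add: w_def C_def T_def R_def)
qed

lemma seg_pt:
  fixes p q :: "real \<times> real"
  assumes "convex A" "p \<in> A" "q \<in> A" "0 \<le> t" "t \<le> 1"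
  shows "(fst q + t * (fst p - fst q), snd q + t * (snd p - snd q)) \<in> A"
proof -
  have "(1 - t) *\<^sub>R q + t *\<^sub>R p \<in> A" using assms by (intro convexD) auto
  moreover have "(1 - t) *\<^sub>R q + t *\<^sub>R p = (fst q + t * (fst p - fst q), snd q + t * (snd p - snd q))"
    by (cases p, cases q) (simp add: algebra_simps)
  ultimately show ?thesis by simp
qed

lemma geo_graph:
  assumes A: "convex_body A" and bg: "boundary_graph b A" and x: "\<bar>x\<bar> \<le> 1"
  shows "(x, \<bar>x\<bar> powr b) \<in> frontier A" "(x, \<bar>x\<bar> powr b) \<in> A"
proof -
  have "(x, \<bar>x\<bar> powr b) \<in> {(x, \<bar>x\<bar> powr b) | x. -1 \<le> x \<and> x \<le> 1}" using x by auto
  then show f: "(x, \<bar>x\<bar> powr b) \<in> frontier A" using bg unfolding boundary_graph_def by blast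
  have "closed A" using A by (simp add: convex_body_def compact_imp_closed)
  then show "(x, \<bar>x\<bar> powr b) \<in> A" using f frontier_subset_closed by blast
qed

lemma geo_region:
  assumes A: "convex_body A" and bg: "boundary_graph b A" and x: "\<bar>x\<bar> \<le> 1"
    and y: "\<bar>x\<bar> powr b \<le> y" "y \<le> 1"
  shows "(x, y) \<in> A"
proof -
  have cA: "convex A" using A by (simp add: convex_body_def)
  have m1: "(-1, 1) \<in> A" using geo_graph(2)[OF A bg, of "-1"] by simp
  have p1: "(1, 1) \<in> A" using geo_graph(2)[OF A bg, of 1] by simp
  have x1: "(x, 1) \<in> A" using seg_pt[OF cA p1 m1, of "(x + 1) / 2"] x by (simp add: field_simps)
  have g: "(x, \<bar>x\<bar> powr b) \<in> A" using geo_graph(2)[OF A bg x] .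
  show ?thesis
  proof (cases "\<bar>x\<bar> powr b = 1")
    case True then show ?thesis using x1 y by (metis order_antisym)
  next
    case False
    then have h: "\<bar>x\<bar> powr b < 1" using y by simp
    define t where "t = (y - \<bar>x\<bar> powr b) / (1 - \<bar>x\<bar> powr b)"
    have t: "0 \<le> t" "t \<le> 1" using h y by (auto simp: t_def field_simps)
    have "\<bar>x\<bar> powr b + t * (1 - \<bar>x\<bar> powr b) = y" using h by (simp add: t_def)
    then show ?thesis using seg_pt[OF cA x1 g t] by simp
  qed
qed

lemma geo_interior:
  assumes A: "convex_body A" and bg: "boundary_graph b A" and b: "0 < b"
    and x: "\<bar>x\<bar> < 1" and y: "\<bar>x\<bar> powr b < y" "y < 1"
  shows "(x, y) \<in> interior A"
proof -
  define U where "U = {p::real\<times>real. \<bar>fst p\<bar> < 1} \<inter> {p. \<bar>fst p\<bar> powr b < snd p} \<inter> {p. snd p < 1}"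
  have c1: "continuous_on UNIV (\<lambda>p::real\<times>real. \<bar>fst p\<bar>)" by (intro continuous_intros)
  have c2: "continuous_on UNIV (\<lambda>p::real\<times>real. \<bar>fst p\<bar> powr b)"
    using b by (intro continuous_on_powr' continuous_intros) auto
  have c3: "continuous_on UNIV (\<lambda>p::real\<times>real. snd p)" by (intro continuous_intros)
  have "open U" unfolding U_def
    by (intro open_Int open_Collect_less c1 c2 c3 continuous_intros)
  moreover have "U \<subseteq> A" unfolding U_def
    using geo_region[OF A bg] by (auto simp: less_imp_le)
  ultimately have "U \<subseteq> interior A" by (rule interior_maximal[rotated])
  moreover have "(x, y) \<in> U" using x y by (simp add: U_def)
  ultimately show ?thesis by blast
qed

lemma geo_epi:
  assumes A: "convex_body A" and bg: "boundary_graph b A" and b: "0 < b"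
    and p: "(x, y) \<in> A" and x: "\<bar>x\<bar> < 1"
  shows "\<bar>x\<bar> powr b \<le> y"
proof (rule ccontr)
  assume "\<not> \<bar>x\<bar> powr b \<le> y"
  then have yl: "y < \<bar>x\<bar> powr b" by simp
  define h where "h = \<bar>x\<bar> powr b"
  have h1: "h < 1" using powr_less_mono2[OF b _ x] by (simp add: h_def)
  define z where "z = (x, (h + 1) / 2)"
  have zi: "z \<in> interior A" unfolding z_def using geo_interior[OF A bg b x] h1 by (simp add: h_def)
  have cA: "convex A" using A by (simp add: convex_body_def)
  have "(x, y) \<in> closure A" using p closure_subset by blast
  note seg = in_interior_closure_convex_segment[OF cA zi this]
  define u where "u = ((h + 1) / 2 - h) / ((h + 1) / 2 - y)"
  have yh: "y < h" using yl by (simp add: h_def)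
  have u: "0 < u" "u < 1" using yh h1 by (auto simp: u_def field_simps)
  have d: "(h + 1) / 2 - y \<noteq> 0" using yh h1 by simp
  have uu: "u * ((h + 1) / 2 - y) = (h + 1) / 2 - h" unfolding u_def using d by (metis nonzero_eq_divide_eq mult.commute)
  have "(1 - u) * ((h + 1) / 2) + u * y = (h + 1) / 2 - u * ((h + 1) / 2 - y)" by (simp add: field_simps)
  then have "(1 - u) * ((h + 1) / 2) + u * y = h" using uu by (simp add: field_simps)
  moreover have "(1 - u) * x + u * x = x" by (simp add: algebra_simps)
  ultimately have "(1 - u) *\<^sub>R z + u *\<^sub>R (x, y) = (x, h)"
    by (simp add: z_def)
  moreover have "z \<noteq> (x, y)" using yh h1 by (simp add: z_def)
  ultimately have "(x, h) \<in> open_segment z (x, y)" using u unfolding in_segment by metis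
  then have "(x, h) \<in> interior A" using seg by blast
  moreover have "(x, h) \<in> frontier A" using geo_graph(1)[OF A bg, of x] x by (simp add: h_def)
  ultimately show False by (simp add: frontier_def)
qed

lemma G_nonneg: assumes "1 < b" "b < 2" "0 \<le> s" shows "0 \<le> GG b s x"
proof -
  have "0 \<le> (b - 1) / 4 * QQ b (aa b s) \<bar>x - aa b s\<bar>" using assms by (simp add: QQ_nonneg)
  then show ?thesis using G_lower[OF assms refl, of x] by linarith
qed

lemma G_at_a: assumes "1 < b" "b < 2" "0 \<le> s" shows "GG b s (aa b s) = 0"
  using G_upper[OF assms refl, of 0] G_nonneg[OF assms, of "aa b s"] by (simp add: QQ_def)

lemma aa_small: assumes b: "1 < b" "b < 2" and s: "0 \<le> s" "s \<le> 1/10" shows "aa b s \<le> 1/10"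
proof (cases "s = 0")
  case True then show ?thesis by (simp add: aa_def)
next
  case False
  have sb: "s / b \<le> s" using b s by (simp add: divide_le_eq mult_le_cancel_left1 less_imp_le)
  have "aa b s \<le> s / b" unfolding aa_def
    using False s b sb by (intro powr_le_one_le) (auto simp: field_simps)
  then show ?thesis using sb s by linarith
qed

lemma half_powr: assumes "1 \<le> b" "b \<le> 2" shows "1/4 \<le> (1/2::real) powr b" "(1/2::real) powr b \<le> 1/2"
proof -
  have "(1/2::real) powr 2 \<le> (1/2) powr b" using assms by (intro powr_mono') auto
  moreover have "(1/2::real) powr 2 = 1/4" by (simp add: powr_realpow[of "1/2" 2, simplified] power2_eq_square)
  ultimately show "1/4 \<le> (1/2::real) powr b" by simp
  show "(1/2::real) powr b \<le> 1/2" using assms by (intro powr_le_one_le) auto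
qed

lemma small_powr: fixes b x :: real assumes "1 \<le> b" "\<bar>x\<bar> \<le> 1" shows "\<bar>x\<bar> powr b \<le> \<bar>x\<bar>"
proof (cases "x = 0")
  case True then show ?thesis by simp
next
  case False then show ?thesis using assms by (intro powr_le_one_le) auto
qed

lemma geo_main:
  assumes b: "1 < b" "b < 2" and A: "convex_body A" and bg: "boundary_graph b A"
    and s: "\<bar>s\<bar> \<le> 1/10" and mu: "0 < \<mu>" "\<mu> \<le> 1/10"
  defines "\<sigma> \<equiv> \<bar>s\<bar>" and "e \<equiv> (if 0 \<le> s then 1 else -1 :: real)"
    and "a \<equiv> aa b \<bar>s\<bar>" and "m \<equiv> - (b - 1) * aa b \<bar>s\<bar> powr b"
  shows "a \<le> 1/10" "(e * a, s * (e * a) + m) \<in> A"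
    "\<forall>p\<in>A. m \<le> snd p - s * fst p"
    "\<forall>p\<in>A. snd p - s * fst p = m + \<mu> \<longrightarrow> \<bar>fst p\<bar> < 1 \<and> GG b \<sigma> (e * fst p) \<le> \<mu>"
    "\<forall>x. \<bar>x\<bar> \<le> 1/2 \<and> GG b \<sigma> (e * x) \<le> \<mu> \<longrightarrow> (x, s * x + m + \<mu>) \<in> A"
proof -
  have sg: "0 \<le> \<sigma>" by (simp add: \<sigma>_def)
  have es: "s * e = \<sigma>" "\<bar>e\<bar> = 1" "e * e = 1" by (auto simp: e_def \<sigma>_def)
  have m: "m = - (b - 1) * a powr b" by (simp add: m_def a_def)
  have a: "a = aa b \<sigma>" by (simp add: a_def \<sigma>_def)
  have a0: "0 \<le> a" by (simp add: a aa_nonneg)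
  show a10: "a \<le> 1/10" using aa_small[OF b sg] s by (simp add: a \<sigma>_def)
  have "0 \<le> (b - 1) * a powr b" using b by simp
  then have m0: "m \<le> 0" unfolding m by linarith
  have idG: "\<bar>x\<bar> powr b - s * x = GG b \<sigma> (e * x) + m" for x
  proof -
    have h1: "\<bar>e * x\<bar> = \<bar>x\<bar>" using es by (simp add: abs_mult)
    have h2: "\<sigma> * (e * x) = s * x" using es by (metis mult.assoc mult.commute mult_1 \<open>s * e = \<sigma>\<close>)
    show ?thesis unfolding GG_def m a[symmetric] h1 h2 by (simp add: algebra_simps)
  qed
  have Gnn: "0 \<le> GG b \<sigma> x" for x using G_nonneg[OF b sg] .
  have qv: "s * (e * a) + m = a powr b"
  proof -
    have "GG b \<sigma> (e * (e * a)) = 0" using es G_at_a[OF b sg] a by (simp add: mult.assoc[symmetric])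
    then show ?thesis using idG[of "e * a"] es a0 by (simp add: abs_mult)
  qed
  have qA: "(e * a, a powr b) \<in> A"
    using geo_graph(2)[OF A bg, of "e * a"] es a0 a10 by (simp add: abs_mult)
  then show "(e * a, s * (e * a) + m) \<in> A" using qv by simp
  have cA: "convex A" using A by (simp add: convex_body_def)
  have key: "m \<le> snd p - s * fst p \<and> (snd p - s * fst p = m + \<mu> \<longrightarrow> \<bar>fst p\<bar> < 1 \<and> GG b \<sigma> (e * fst p) \<le> \<mu>)"
    if pA: "p \<in> A" for p
  proof (cases "\<bar>fst p\<bar> < 1")
    case True
    have "\<bar>fst p\<bar> powr b \<le> snd p" using geo_epi[OF A bg _ _ True, of "snd p"] b pA by simp
    then have "GG b \<sigma> (e * fst p) + m \<le> snd p - s * fst p" using idG[of "fst p"] by linarith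
    then show ?thesis using Gnn[of "e * fst p"] True by auto
  next
    case False
    define x where "x = fst p"
    define y where "y = snd p"
    define xs where "xs = (if 0 \<le> x then 1/2 else -1/2 :: real)"
    define t where "t = (xs - e * a) / (x - e * a)"
    have ea: "\<bar>e * a\<bar> \<le> 1/10" using es a0 a10 by (simp add: abs_mult)
    have x1: "1 \<le> \<bar>x\<bar>" using False by (simp add: x_def)
    have den: "x - e * a \<noteq> 0" using ea x1 by auto
    have t: "0 < t" "t \<le> 1"
    proof -
      show "0 < t" unfolding t_def using ea x1 by (cases "0 \<le> x") (auto simp: xs_def divide_pos_pos divide_neg_neg abs_le_iff)
      show "t \<le> 1" unfolding t_def using ea x1
        by (cases "0 \<le> x") (auto simp: xs_def divide_le_eq abs_le_iff)
    qed
    have txs: "e * a + t * (x - e * a) = xs" using den by (simp add: t_def)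
    have pp: "(e * a + t * (x - e * a), a powr b + t * (y - a powr b)) \<in> A"
      using seg_pt[OF cA pA qA, of t] t by (simp add: x_def y_def)
    then have pp': "(xs, a powr b + t * (y - a powr b)) \<in> A" using txs by simp
    have "\<bar>xs\<bar> powr b \<le> a powr b + t * (y - a powr b)"
      using geo_epi[OF A bg _ pp'] b by (simp add: xs_def)
    moreover have "\<bar>xs\<bar> powr b = (1/2) powr b" by (simp add: xs_def)
    moreover have "1/4 \<le> (1/2::real) powr b" using half_powr b by simp
    moreover have "\<bar>s * xs\<bar> \<le> 1/20" using s by (simp add: xs_def abs_mult)
    ultimately have V1: "1/5 \<le> a powr b + t * (y - a powr b) - s * xs" by (simp add: abs_le_iff)
    have "a powr b + t * (y - a powr b) - s * xs = (1 - t) * m + t * (y - s * x)"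
    proof -
      have "a powr b - s * (e * a) = m" using qv by simp
      then show ?thesis unfolding txs[symmetric] by (simp add: algebra_simps)
    qed
    then have "1/5 \<le> (1 - t) * m + t * (y - s * x)" using V1 by simp
    moreover have "t * m + t * (1/5) \<le> 1/5 - m + t * m"
      using t m0 by (simp add: algebra_simps)
    ultimately have "t * (m + 1/5) \<le> t * (y - s * x)" by (simp add: algebra_simps)
    then have "m + 1/5 \<le> y - s * x" using t by simp
    then show ?thesis using mu by (auto simp: x_def y_def)
  qed
  show "\<forall>p\<in>A. m \<le> snd p - s * fst p" using key by blast
  show "\<forall>p\<in>A. snd p - s * fst p = m + \<mu> \<longrightarrow> \<bar>fst p\<bar> < 1 \<and> GG b \<sigma> (e * fst p) \<le> \<mu>" using key by blast
  show "\<forall>x. \<bar>x\<bar> \<le> 1/2 \<and> GG b \<sigma> (e * x) \<le> \<mu> \<longrightarrow> (x, s * x + m + \<mu>) \<in> A"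
  proof (intro allI impI)
    fix x assume h: "\<bar>x\<bar> \<le> 1/2 \<and> GG b \<sigma> (e * x) \<le> \<mu>"
    have y1: "\<bar>x\<bar> powr b \<le> s * x + m + \<mu>" using idG[of x] h by linarith
    have "\<bar>x\<bar> powr b \<le> 1/2" using small_powr[of b x] b h by linarith
    then have y2: "s * x + m + \<mu> \<le> 1" using idG[of x] Gnn[of "e * x"] mu by linarith
    show "(x, s * x + m + \<mu>) \<in> A" using geo_region[OF A bg _ y1 y2] h by simp
  qed
qed

lemma cos_small: fixes t :: real assumes "\<bar>t\<bar> < 1/100" shows "1/2 \<le> cos t"
proof -
  have "0 \<le> cos t" using assms pi_gt3 by (intro cos_ge_zero) auto
  moreover have "(sin t)^2 \<le> t^2" using abs_sin_x_le_abs_x[of t] by (metis abs_ge_zero power2_abs power_mono)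
  moreover have "t^2 \<le> (1/100)^2" using assms by (metis abs_ge_zero power2_abs power_mono less_imp_le)
  moreover have "(cos t)^2 = 1 - (sin t)^2" using sin_cos_squared_add[of t] by linarith
  ultimately have "(1/2)^2 \<le> (cos t)^2" by (simp add: power2_eq_square)
  then have "\<bar>1/2\<bar> \<le> \<bar>cos t\<bar>" using abs_le_square_iff by blast
  then show ?thesis using \<open>0 \<le> cos t\<close> by simp
qed

lemma sin_small: fixes t :: real assumes "\<bar>t\<bar> < 1/100" shows "\<bar>t\<bar> / 2 \<le> \<bar>sin t\<bar>"
proof (cases "t = 0")
  case True then show ?thesis by simp
next
  case False
  then have "0 < \<bar>t\<bar>" by simp
  then obtain z where z: "0 < z" "z < \<bar>t\<bar>" "sin \<bar>t\<bar> - sin 0 = (\<bar>t\<bar> - 0) * cos z"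
    using MVT2[of 0 "\<bar>t\<bar>" sin cos] by (auto intro: DERIV_sin)
  have "1/2 \<le> cos z" using z assms by (intro cos_small) auto
  then have "\<bar>t\<bar> / 2 \<le> sin \<bar>t\<bar>" using z \<open>0 < \<bar>t\<bar>\<close> by (simp add: mult_left_mono[of "1/2" "cos z" "\<bar>t\<bar>", simplified])
  moreover have "sin \<bar>t\<bar> = \<bar>sin t\<bar>"
  proof (cases "0 \<le> t")
    case True then show ?thesis using \<open>\<bar>t\<bar> / 2 \<le> sin \<bar>t\<bar>\<close> \<open>0 < \<bar>t\<bar>\<close> by auto
  next
    case False then have "sin \<bar>t\<bar> = - sin t" by simp
    then show ?thesis using \<open>\<bar>t\<bar> / 2 \<le> sin \<bar>t\<bar>\<close> \<open>0 < \<bar>t\<bar>\<close> by auto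
  qed
  ultimately show ?thesis by simp
qed

lemma inner_udir: "p \<bullet> udir (t + pi / 2) = cos t * (snd p - tan t * fst p)" if "cos t \<noteq> 0"
proof -
  have c: "cos (t + pi/2) = - sin t" by (simp add: cos_add)
  have s: "sin (t + pi/2) = cos t" by (simp add: sin_add)
  show ?thesis unfolding udir_def c s using that by (cases p) (simp add: tan_def field_simps)
qed

lemma chord_bounds:
  assumes b: "1 < b" "b < 2" and A: "convex_body A" and bg: "boundary_graph b A"
    and th: "\<bar>\<theta>\<bar> < 1/100" and l: "0 < l" "l < 1/100"
  defines "\<sigma> \<equiv> \<bar>tan \<theta>\<bar>" and "a \<equiv> aa b \<bar>tan \<theta>\<bar>" and "\<mu> \<equiv> l / cos \<theta>"
  shows "l \<le> \<mu>" "\<mu> \<le> 2 * l" "\<bar>\<theta>\<bar> / 2 \<le> \<sigma>" "\<sigma> \<le> 2 * \<bar>\<theta>\<bar>" "a \<le> 1/10"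
    "\<And>w. 0 \<le> w \<Longrightarrow> a + w \<le> 1/2 \<Longrightarrow> GG b \<sigma> (a + w) \<le> \<mu> \<Longrightarrow> w \<le> chord_len A (\<theta> + pi/2) l"
    "\<And>W. (\<forall>x. GG b \<sigma> x \<le> \<mu> \<longrightarrow> \<bar>x - a\<bar> < W) \<Longrightarrow> chord_len A (\<theta> + pi/2) l \<le> 4 * W"
proof -
  have c2: "1/2 \<le> cos \<theta>" using cos_small th by simp
  have c1: "cos \<theta> \<le> 1" by simp
  have cp: "0 < cos \<theta>" using c2 by simp
  show lm: "l \<le> \<mu>" unfolding \<mu>_def using l cp c1 by (simp add: le_divide_eq)
  show m2: "\<mu> \<le> 2 * l" unfolding \<mu>_def using l cp c2 by (simp add: divide_le_eq)
  have st: "\<sigma> = \<bar>sin \<theta>\<bar> / cos \<theta>" unfolding \<sigma>_def tan_def using cp by (simp add: abs_divide)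
  have "\<bar>sin \<theta>\<bar> * cos \<theta> \<le> \<bar>sin \<theta>\<bar>" using cp c1 by (intro mult_right_le_one_le) auto
  then have "\<bar>sin \<theta>\<bar> \<le> \<bar>sin \<theta>\<bar> / cos \<theta>" using cp by (simp add: le_divide_eq)
  then show "\<bar>\<theta>\<bar> / 2 \<le> \<sigma>" using sin_small[OF th] st by linarith
  have "\<bar>sin \<theta>\<bar> / cos \<theta> \<le> \<bar>\<theta>\<bar> / (1/2)" using abs_sin_x_le_abs_x[of \<theta>] cp c2
    by (intro frac_le) auto
  then show s2: "\<sigma> \<le> 2 * \<bar>\<theta>\<bar>" using st by simp
  have s10: "\<bar>tan \<theta>\<bar> \<le> 1/10" using s2 th by (simp add: \<sigma>_def)
  have mu: "0 < \<mu>" "\<mu> \<le> 1/10" using lm m2 l by auto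
  define s where "s = tan \<theta>"
  define e where "e = (if 0 \<le> s then 1 else -1 :: real)"
  define m where "m = - (b - 1) * aa b \<bar>s\<bar> powr b"
  note G = geo_main[OF b A bg _ mu, of s, folded s_def e_def m_def, OF s10[folded s_def]]
  have sa: "\<sigma> = \<bar>s\<bar>" "a = aa b \<bar>s\<bar>" by (simp_all add: \<sigma>_def a_def s_def)
  show a10: "a \<le> 1/10" using G(1) sa by simp
  have inn: "p \<bullet> udir (\<theta> + pi / 2) = cos \<theta> * (snd p - s * fst p)" for p
    using inner_udir[of \<theta> p] cp by (simp add: s_def)
  have inf: "(INF y\<in>A. y \<bullet> udir (\<theta> + pi / 2)) = cos \<theta> * m"
    unfolding inn
  proof (rule cInf_eq_minimum)
    show "cos \<theta> * m \<in> (\<lambda>y. cos \<theta> * (snd y - s * fst y)) ` A"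
      using G(2) by (intro image_eqI[of _ _ "(e * aa b \<bar>s\<bar>, s * (e * aa b \<bar>s\<bar>) + m)"]) auto
    show "cos \<theta> * m \<le> x" if "x \<in> (\<lambda>y. cos \<theta> * (snd y - s * fst y)) ` A" for x
      using that G(3) cp by (auto intro: mult_left_mono)
  qed
  have chord: "chord A (\<theta> + pi/2) l = {p \<in> A. snd p - s * fst p = m + \<mu>}"
  proof -
    have "cos \<theta> * (snd p - s * fst p) = cos \<theta> * m + l \<longleftrightarrow> snd p - s * fst p = m + \<mu>" for p
      using cp by (auto simp: \<mu>_def field_simps)
    then show ?thesis unfolding chord_def inf unfolding inn by auto
  qed
  have bA: "bounded A" using A by (simp add: convex_body_def compact_imp_bounded)
  have bC: "bounded (chord A (\<theta> + pi/2) l)" unfolding chord by (rule bounded_subset[OF bA]) auto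
  have inC: "(x, s * x + m + \<mu>) \<in> chord A (\<theta> + pi/2) l" if "\<bar>x\<bar> \<le> 1/2" "GG b \<sigma> (e * x) \<le> \<mu>" for x
    unfolding chord using G(5) that sa by auto
  have ee: "e * e = 1" "\<bar>e\<bar> = 1" by (auto simp: e_def)
  show "w \<le> chord_len A (\<theta> + pi/2) l" if w: "0 \<le> w" "a + w \<le> 1/2" "GG b \<sigma> (a + w) \<le> \<mu>" for w
  proof -
    have a0: "0 \<le> a" by (simp add: a_def aa_nonneg)
    have "GG b \<sigma> a = 0" using G_at_a[OF b, of \<sigma>] sa by simp
    then have P1: "(e * a, s * (e * a) + m + \<mu>) \<in> chord A (\<theta> + pi/2) l"
      using inC[of "e * a"] ee a0 w mu by (simp add: abs_mult mult.assoc[symmetric])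
    have P2: "(e * (a + w), s * (e * (a + w)) + m + \<mu>) \<in> chord A (\<theta> + pi/2) l"
      using inC[of "e * (a + w)"] ee a0 w by (simp add: abs_mult mult.assoc[symmetric])
    have "dist (e * (a + w), s * (e * (a + w)) + m + \<mu>) (e * a, s * (e * a) + m + \<mu>) \<le> chord_len A (\<theta> + pi/2) l"
      unfolding chord_len_def by (rule diameter_bounded_bound[OF bC P2 P1])
    moreover have "w \<le> dist (e * (a + w), s * (e * (a + w)) + m + \<mu>) (e * a, s * (e * a) + m + \<mu>)"
    proof -
      have "norm (e * (a + w) - e * a) \<le> norm ((e * (a + w), s * (e * (a + w)) + m + \<mu>) - (e * a, s * (e * a) + m + \<mu>))"
        using norm_fst_le[of "e * (a + w) - e * a" "s * (e * (a + w)) - s * (e * a)"] by simp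
      moreover have "norm (e * (a + w) - e * a) = w" using ee w by (simp add: algebra_simps abs_mult)
      ultimately show ?thesis by (simp add: dist_norm)
    qed
    ultimately show ?thesis by linarith
  qed
  show "chord_len A (\<theta> + pi/2) l \<le> 4 * W" if W: "\<forall>x. GG b \<sigma> x \<le> \<mu> \<longrightarrow> \<bar>x - a\<bar> < W" for W
    unfolding chord_len_def
  proof (rule diameter_le)
    have "GG b \<sigma> a = 0" using G_at_a[OF b, of \<sigma>] sa by simp
    then have "\<bar>a - a\<bar> < W" using W mu by (metis less_imp_le)
    then have "0 < W" by simp
    then show "chord A (\<theta> + pi / 2) l \<noteq> {} \<or> 0 \<le> 4 * W" by simp
    fix p q assume p: "p \<in> chord A (\<theta> + pi / 2) l" and q: "q \<in> chord A (\<theta> + pi / 2) l"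
    have hp: "\<bar>e * fst p - a\<bar> < W" "snd p = s * fst p + m + \<mu>"
      using p G(4) W sa unfolding chord by auto
    have hq: "\<bar>e * fst q - a\<bar> < W" "snd q = s * fst q + m + \<mu>"
      using q G(4) W sa unfolding chord by auto
    have dx: "\<bar>fst p - fst q\<bar> \<le> 2 * W"
    proof -
      have "\<bar>e * fst p - e * fst q\<bar> \<le> 2 * W" using hp hq by linarith
      moreover have "\<bar>e * fst p - e * fst q\<bar> = \<bar>fst p - fst q\<bar>" using ee
        by (simp add: right_diff_distrib[symmetric] abs_mult)
      ultimately show ?thesis by simp
    qed
    have dy: "\<bar>snd p - snd q\<bar> \<le> \<bar>fst p - fst q\<bar>"
    proof -
      have "\<bar>snd p - snd q\<bar> = \<bar>s\<bar> * \<bar>fst p - fst q\<bar>" using hp hq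
        by (simp add: right_diff_distrib[symmetric] abs_mult)
      also have "\<dots> \<le> 1 * \<bar>fst p - fst q\<bar>" using s10 by (intro mult_right_mono) (auto simp: s_def)
      finally show ?thesis by simp
    qed
    have "norm (p - q) \<le> norm (fst p - fst q) + norm (snd p - snd q)"
      using norm_Pair_le[of "fst p - fst q" "snd p - snd q"] by (cases p, cases q) simp
    then show "norm (p - q) \<le> 4 * W" using dx dy by simp
  qed
qed

lemma small_l: fixes l b :: real assumes b: "1 < b" and l: "0 < l" and h: "l powr ((b - 1) / b) < 1/100"
  shows "l < 1/100"
proof (rule ccontr)
  assume "\<not> l < 1/100"
  then have "(1/100) powr ((b - 1) / b) \<le> l powr ((b - 1) / b)" using b by (intro powr_mono2) auto
  moreover have "(1/100::real) powr 1 \<le> (1/100) powr ((b - 1) / b)" using b by (intro powr_mono') auto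
  ultimately show False using h by simp
qed

lemma powr_inv_exp: fixes x e :: real assumes "0 \<le> x" "e \<noteq> 0" shows "(x powr e) powr (1 / e) = x"
  using assms by (simp add: powr_powr)

theorem proposition3p3:
  "\<exists>c>0. \<forall>\<beta>::real. 1 < \<beta> \<and> \<beta> < 2 \<longrightarrow>
     (\<exists>c1>0. \<exists>c2>0. \<forall>A. convex_body A \<and> has_centre_of_symmetry A \<and> y_axis_symmetric A
         \<and> boundary_graph \<beta> A \<longrightarrow>
       (\<forall>\<theta> l::real. l > 0 \<longrightarrow>
          ((\<bar>\<theta>\<bar> < l powr ((\<beta> - 1) / \<beta>) \<and> l powr ((\<beta> - 1) / \<beta>) < c \<longrightarrow>
              c1 * l powr (1 / \<beta>) \<le> chord_len A (\<theta> + pi / 2) l \<and>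
              chord_len A (\<theta> + pi / 2) l \<le> c2 * l powr (1 / \<beta>))
         \<and> (l powr ((\<beta> - 1) / \<beta>) \<le> \<bar>\<theta>\<bar> \<and> \<bar>\<theta>\<bar> < c \<longrightarrow>
              c1 * (l powr (1/2) * \<bar>\<theta>\<bar> powr ((2 - \<beta>) / (2 * (\<beta> - 1))))
                \<le> chord_len A (\<theta> + pi / 2) l \<and>
              chord_len A (\<theta> + pi / 2) l
                \<le> c2 * (l powr (1/2) * \<bar>\<theta>\<bar> powr ((2 - \<beta>) / (2 * (\<beta> - 1))))))))"
proof (rule exI[of _ "1/100"], intro conjI allI impI)
  show "(0::real) < 1/100" by simp
  fix b :: real assume "1 < b \<and> b < 2"
  then have b: "1 < b" "b < 2" by auto
  define g where "g = (2 - b) / (2 * (b - 1))"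
  define D where "D = (2::real) powr (1 / (b - 1))"
  define C1 where "C1 = D + 16 / (b - 1) + 1"
  define E where "E = (4::real) powr (b / (b - 1))"
  define C2 where "C2 = 1 + 16 * sqrt E / (b - 1)"
  define c1 where "c1 = min (1/4) (1 / (2 * 4 powr g))"
  define c2 where "c2 = max (4 * C1) (4 * C2 * 2 powr g)"
  have g0: "0 \<le> g" using b by (simp add: g_def)
  have D0: "0 \<le> D" by (simp add: D_def)
  have E1: "1 \<le> E" unfolding E_def using b by (intro ge_one_powr_ge_zero) auto
  show "\<exists>c1>0. \<exists>c2>0. \<forall>A. convex_body A \<and> has_centre_of_symmetry A \<and> y_axis_symmetric A
         \<and> boundary_graph b A \<longrightarrow>
       (\<forall>\<theta> l::real. l > 0 \<longrightarrow>
          ((\<bar>\<theta>\<bar> < l powr ((b - 1) / b) \<and> l powr ((b - 1) / b) < 1/100 \<longrightarrow>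
              c1 * l powr (1 / b) \<le> chord_len A (\<theta> + pi / 2) l \<and>
              chord_len A (\<theta> + pi / 2) l \<le> c2 * l powr (1 / b))
         \<and> (l powr ((b - 1) / b) \<le> \<bar>\<theta>\<bar> \<and> \<bar>\<theta>\<bar> < 1/100 \<longrightarrow>
              c1 * (l powr (1/2) * \<bar>\<theta>\<bar> powr ((2 - b) / (2 * (b - 1))))
                \<le> chord_len A (\<theta> + pi / 2) l \<and>
              chord_len A (\<theta> + pi / 2) l
                \<le> c2 * (l powr (1/2) * \<bar>\<theta>\<bar> powr ((2 - b) / (2 * (b - 1)))))))"
  proof (rule exI[of _ c1], rule conjI[rotated], rule exI[of _ c2], intro conjI allI impI)
    show "0 < c1" by (simp add: c1_def)
    show "0 < c2"
    proof -
      have "0 < 16 / (b - 1)" using b by simp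
      then have "0 < C1" using D0 unfolding C1_def by (metis add_nonneg_pos add_pos_pos zero_less_one less_imp_le)
      then have "0 < 4 * C1" by simp
      then show ?thesis by (simp add: c2_def less_max_iff_disj)
    qed
    fix A :: "(real \<times> real) set" and \<theta> l :: real
    assume HA: "convex_body A \<and> has_centre_of_symmetry A \<and> y_axis_symmetric A \<and> boundary_graph b A"
    assume l: "(l::real) > 0"
    have A: "convex_body A" and bg: "boundary_graph b A" using HA by auto
    define \<sigma> where "\<sigma> = \<bar>tan \<theta>\<bar>"
    define a where "a = aa b \<sigma>"
    define \<mu> where "\<mu> = l / cos \<theta>"
    have \<sigma>0: "0 \<le> \<sigma>" by (simp add: \<sigma>_def)
    have apow: "a powr (b - 1) = \<sigma> / b" using aa_pow[OF b(1) \<sigma>0] by (simp add: a_def)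
    have a0: "0 \<le> a" by (simp add: a_def aa_nonneg)
    have sb: "\<sigma> / b \<le> \<sigma>" using b \<sigma>0 by (simp add: divide_le_eq mult_le_cancel_left1 less_imp_le)
    have sb': "\<sigma> / 2 \<le> \<sigma> / b" using b \<sigma>0 by (intro divide_left_mono) auto
    note CB = chord_bounds[OF b A bg _ l, of \<theta>, folded \<sigma>_def a_def \<mu>_def]
    {
      assume h0: "\<bar>\<theta>\<bar> < l powr ((b - 1) / b) \<and> l powr ((b - 1) / b) < 1/100"
      then have h: "\<bar>\<theta>\<bar> < l powr ((b - 1) / b)" "l powr ((b - 1) / b) < 1/100" by auto
      have th: "\<bar>\<theta>\<bar> < 1/100" using h by linarith
      have l1: "l < 1/100" using small_l[OF b(1) l h(2)] .
      note CB = CB[OF th l1]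
      have aD: "a \<le> D * l powr (1 / b)"
      proof -
        have "a powr (b - 1) \<le> 2 * l powr ((b - 1) / b)"
          using apow CB(4) h(1) sb by linarith
        then have "(a powr (b - 1)) powr (1 / (b - 1)) \<le> (2 * l powr ((b - 1) / b)) powr (1 / (b - 1))"
          using b by (intro powr_mono2) auto
        moreover have "(a powr (b - 1)) powr (1 / (b - 1)) = a" using a0 b by (intro powr_inv_exp) auto
        moreover have "(2 * l powr ((b - 1) / b)) powr (1 / (b - 1)) = D * l powr (1 / b)"
          using b l by (simp add: powr_mult powr_powr D_def)
        ultimately show ?thesis by simp
      qed
      have Tl: "l powr (1/b) \<le> 1" using l l1 b by (intro powr_le1) auto
      have low: "l powr (1/b) / 4 \<le> chord_len A (\<theta> + pi / 2) l"
        using CB(6)[of "l powr (1/b) / 4"] case1_lower[OF b \<sigma>0 a_def l(1) CB(1)] CB(5) Tl by simp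
      have up: "chord_len A (\<theta> + pi / 2) l \<le> 4 * (C1 * l powr (1/b))"
        using CB(7) case1_upper[OF b \<sigma>0 a_def l CB(2) D0 aD] by (simp add: C1_def)
      show "c1 * l powr (1 / b) \<le> chord_len A (\<theta> + pi / 2) l"
      proof -
        have "c1 * l powr (1 / b) \<le> 1/4 * l powr (1/b)" by (intro mult_right_mono) (auto simp: c1_def)
        then show ?thesis using low by simp
      qed
      show "chord_len A (\<theta> + pi / 2) l \<le> c2 * l powr (1 / b)"
      proof -
        have "4 * C1 * l powr (1 / b) \<le> c2 * l powr (1/b)" by (intro mult_right_mono) (auto simp: c2_def)
        then show ?thesis using up by (simp add: mult.assoc)
      qed
    }
    {
      assume h0: "l powr ((b - 1) / b) \<le> \<bar>\<theta>\<bar> \<and> \<bar>\<theta>\<bar> < 1/100"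
      then have h: "l powr ((b - 1) / b) \<le> \<bar>\<theta>\<bar>" "\<bar>\<theta>\<bar> < 1/100" by auto
      have lp: "0 < l powr ((b - 1) / b)" using l by simp
      have l1: "l < 1/100" using small_l[OF b(1) l] h by linarith
      note CB = CB[OF h(2) l1]
      have thp: "0 < \<bar>\<theta>\<bar>" using h lp by linarith
      have \<sigma>p: "0 < \<sigma>" using CB(3) thp by linarith
      have ap: "0 < a" using aa_pos[OF b(1) \<sigma>p] by (simp add: a_def)
      have lE: "l \<le> E * a powr b"
      proof -
        have "\<bar>\<theta>\<bar> \<le> 4 * a powr (b - 1)"
          using apow CB(3) sb' by linarith
        then have "l powr ((b - 1) / b) \<le> 4 * a powr (b - 1)" using h by linarith
        then have "(l powr ((b - 1) / b)) powr (b / (b - 1)) \<le> (4 * a powr (b - 1)) powr (b / (b - 1))"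
          using b by (intro powr_mono2) auto
        moreover have "(l powr ((b - 1) / b)) powr (b / (b - 1)) = l"
          using l b powr_inv_exp[of l "(b - 1) / b"] by simp
        moreover have "(4 * a powr (b - 1)) powr (b / (b - 1)) = E * a powr b"
          using b a0 by (simp add: powr_mult powr_powr E_def)
        ultimately show ?thesis by simp
      qed
      define T where "T = l powr (1/2) * a powr ((2 - b)/2)"
      have T1: "T \<le> 1/10"
      proof -
        have "l powr (1/2) \<le> (1/100) powr (1/2)" using l l1 by (intro powr_mono2) auto
        moreover have "(1/100::real) powr (1/2) = 1/10"
        proof -
          have "sqrt (1/100::real) = 1/10" by (rule real_sqrt_unique) (simp_all add: power2_eq_square)
          then show ?thesis by (simp add: powr_half_sqrt)
        qed
        ultimately have "l powr (1/2) \<le> 1/10" by simp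
        moreover have "a powr ((2 - b)/2) \<le> 1" using b a0 CB(5) by (intro powr_le1) auto
        ultimately show ?thesis unfolding T_def
          using mult_mono[of "l powr (1/2)" "1/10" "a powr ((2 - b)/2)" 1] by simp
      qed
      have T0: "0 \<le> T" by (simp add: T_def)
      have low: "T / 2 \<le> chord_len A (\<theta> + pi / 2) l"
        using CB(6)[of "T / 2"] case2_lower[OF b \<sigma>0 a_def ap l(1) CB(1)] CB(5) T1 T0 by (simp add: T_def)
      have up: "chord_len A (\<theta> + pi / 2) l \<le> 4 * (C2 * T)"
        using CB(7) case2_upper[OF b \<sigma>0 a_def ap l(1) CB(2) E1 lE] by (simp add: C2_def T_def)
      have ag: "a powr ((2 - b)/2) = (\<sigma> / b) powr g"
      proof -
        have "(a powr (b - 1)) powr g = a powr ((b - 1) * g)" by (simp add: powr_powr)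
        moreover have "(b - 1) * g = (2 - b) / 2"
        proof -
          have nz: "b - 1 \<noteq> 0" using b by simp
          have "(b - 1) * g = ((b - 1) * (2 - b)) / ((b - 1) * 2)" by (simp add: g_def mult.commute)
          also have "\<dots> = (2 - b) / 2" using nz by (rule mult_divide_mult_cancel_left)
          finally show ?thesis .
        qed
        ultimately show ?thesis using apow by simp
      qed
      have sb1: "\<bar>\<theta>\<bar> / 4 \<le> \<sigma> / b" using CB(3) sb' by linarith
      have sb2: "\<sigma> / b \<le> 2 * \<bar>\<theta>\<bar>" using CB(4) sb by linarith
      have gl: "\<bar>\<theta>\<bar> powr g / 4 powr g \<le> a powr ((2 - b)/2)"
      proof -
        have "(\<bar>\<theta>\<bar> / 4) powr g \<le> (\<sigma> / b) powr g" using sb1 g0 by (intro powr_mono2) auto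
        then show ?thesis using ag by (simp add: powr_divide)
      qed
      have gu: "a powr ((2 - b)/2) \<le> 2 powr g * \<bar>\<theta>\<bar> powr g"
      proof -
        have "(\<sigma> / b) powr g \<le> (2 * \<bar>\<theta>\<bar>) powr g" using sb2 g0 \<sigma>0 b by (intro powr_mono2) auto
        then show ?thesis using ag by (simp add: powr_mult)
      qed
      define X where "X = l powr (1/2) * \<bar>\<theta>\<bar> powr g"
      have X0: "0 \<le> X" by (simp add: X_def)
      have TX1: "X / 4 powr g \<le> T"
      proof -
        have "l powr (1/2) * (\<bar>\<theta>\<bar> powr g / 4 powr g) \<le> l powr (1/2) * a powr ((2 - b)/2)"
          using gl by (intro mult_left_mono) auto
        then show ?thesis unfolding X_def T_def by simp
      qed
      have TX2: "T \<le> 2 powr g * X"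
      proof -
        have "l powr (1/2) * a powr ((2 - b)/2) \<le> l powr (1/2) * (2 powr g * \<bar>\<theta>\<bar> powr g)"
          using gu by (intro mult_left_mono) auto
        then show ?thesis unfolding X_def T_def by (simp add: mult.left_commute)
      qed
      show "c1 * (l powr (1/2) * \<bar>\<theta>\<bar> powr ((2 - b) / (2 * (b - 1)))) \<le> chord_len A (\<theta> + pi / 2) l"
      proof -
        have "c1 * X \<le> 1 / (2 * 4 powr g) * X" using X0 by (intro mult_right_mono) (auto simp: c1_def)
        also have "\<dots> = (X / 4 powr g) / 2" by simp
        also have "\<dots> \<le> T / 2" using TX1 by simp
        finally show ?thesis using low by (simp add: X_def g_def)
      qed
      show "chord_len A (\<theta> + pi / 2) l \<le> c2 * (l powr (1/2) * \<bar>\<theta>\<bar> powr ((2 - b) / (2 * (b - 1))))"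
      proof -
        have C20: "0 \<le> C2" using E1 b by (simp add: C2_def)
        have "4 * (C2 * T) \<le> 4 * (C2 * (2 powr g * X))" using TX2 C20 by (intro mult_left_mono) auto
        also have "\<dots> = (4 * C2 * 2 powr g) * X" by simp
        also have "\<dots> \<le> c2 * X" using X0 by (intro mult_right_mono) (auto simp: c2_def)
        finally show ?thesis using up by (simp add: X_def g_def)
      qed
    }
  qed
qed

end
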